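(* Let $c>0$, let $\nu,\tilde\nu$ be probability measures on $\mathbb R_+$ different from $\boldsymbol d_0$, and for $z\in\mathbb C_+$ let $(\delta(z),\tilde\delta(z))\in\mathbb C_+^2$ be the unique solution of $\delta = c\int \frac{t}{-z(1+\tilde\delta t)}\nu(dt)$, $\tilde\delta=\int\frac{t}{-z(1+\delta t)}\tilde\nu(dt)$. Then for $\ell=1,2$ the integrals $$\int\frac{t^\ell}{|1+\tilde\delta(z)t|^2}\,\nu(dt)\qquad\text{and}\qquad\int\frac{t^\ell}{|1+\delta(z)t|^2}\,\tilde\nu(dt)$$ are bounded on every bounded region $\mathcal R\subset\mathbb C_+$ lying at positive distance from the imaginary axis.
   Context: $\mathbb C_+=\{z:\Im z>0\}$, $\boldsymbol d_0$ is the Dirac mass at $0$; existence and uniqueness of the solution of the system in $\mathbb C_+^2$ is known. *)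

theory Defs
  imports "HOL-Probability.Probability"
begin

end

theory Submission
  imports Defs
begin


lemma pw_Im: fixes w :: complex and t :: real
  assumes "t \<ge> 0" shows "t * Im w \<le> cmod (1 + w * of_real t)"
proof -
  have "Im (1 + w * of_real t) = t * Im w" by simp
  then show ?thesis using abs_Im_le_cmod[of "1 + w * of_real t"] by linarith
qed

lemma pw_pos: fixes w :: complex and t :: real
  assumes "Im w > 0" shows "cmod (1 + w * of_real t) > 0"
proof (cases "t = 0")
  case True then show ?thesis by simp
next
  case False
  have "Im (1 + w * of_real t) = t * Im w" by simp
  then have "Im (1 + w * of_real t) \<noteq> 0" using False assms by simp
  then have "1 + w * of_real t \<noteq> 0" by (metis zero_complex.sel(2))
  then show ?thesis by simp
qed

lemma pw_half: fixes w :: complex and t :: real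
  assumes "t \<ge> 0" "cmod w * t \<le> 1/2" shows "cmod (1 + w * of_real t) \<ge> 1/2"
proof -
  have "cmod (w * of_real t) = cmod w * t" using assms(1) by (simp add: norm_mult)
  moreover have "1 \<le> cmod (1 + w * of_real t) + cmod (w * of_real t)"
    using norm_triangle_ineq4[of "1 + w * of_real t" "w * of_real t"] by simp
  ultimately show ?thesis using assms by linarith
qed

lemma pw_sq_le: fixes w :: complex and t :: real
  assumes "t \<ge> 0" "Im w > 0" shows "t^2 / (cmod (1 + w * of_real t))^2 \<le> 1 / (Im w)^2"
proof -
  have p: "cmod (1 + w * of_real t) > 0" by (rule pw_pos[OF assms(2)])
  have "t * Im w \<le> cmod (1 + w * of_real t)" by (rule pw_Im[OF assms(1)])
  then have "(t * Im w)^2 \<le> (cmod (1 + w * of_real t))^2"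
    using assms by (intro power_mono) auto
  then show ?thesis using p assms by (simp add: field_simps power_mult_distrib)
qed

lemma pw_norm_sq: fixes w :: complex and t :: real
  shows "(cmod (of_real t / (1 + w * of_real t)))^2 = t^2 / (cmod (1 + w * of_real t))^2"
  by (simp add: norm_divide power_divide)

lemma pw_tail: fixes w :: complex and t T l :: real
  assumes "t \<ge> 0" "Im w > 0" "T > 0" "l > 0" "cmod w * T \<le> 1/2"
  shows "cmod (of_real t / (1 + w * of_real t)) \<le>
     2*T + indicator {x. T < x} t / (2*l) + l/2 * (t^2 / (cmod (1 + w * of_real t))^2)"
proof -
  have p: "cmod (1 + w * of_real t) > 0" by (rule pw_pos[OF assms(2)])
  define u where "u = cmod (of_real t / (1 + w * of_real t))"
  have u0: "u \<ge> 0" unfolding u_def by simp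
  have usq: "u^2 = t^2 / (cmod (1 + w * of_real t))^2" unfolding u_def by (rule pw_norm_sq)
  have ind0: "indicator {x. T < x} t \<ge> (0::real)" by simp
  have sq0: "t^2 / (cmod (1 + w * of_real t))^2 \<ge> 0" by simp
  show ?thesis
  proof (cases "t \<le> T")
    case True
    have "cmod w * t \<le> cmod w * T" using True by (simp add: mult_left_mono)
    then have h: "cmod (1 + w * of_real t) \<ge> 1/2" using assms by (intro pw_half) auto
    have "u = t / cmod (1 + w * of_real t)" unfolding u_def using assms(1) by (simp add: norm_divide)
    also have "\<dots> \<le> t / (1/2)" using h assms(1) by (intro divide_left_mono) auto
    finally have "u \<le> 2 * T" using True by simp
    then show ?thesis using ind0 sq0 assms u_def
      by (smt (verit) divide_nonneg_nonneg mult_nonneg_nonneg)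
  next
    case False
    then have ind: "indicator {x. T < x} t = (1::real)" by simp
    have "0 \<le> (l*u - 1)^2" by simp
    then have "2*l*u \<le> 1 + l^2 * u^2" by (simp add: power2_eq_square algebra_simps)
    then have "u \<le> 1/(2*l) + l/2 * u^2" using assms(4)
      by (simp add: field_simps power2_eq_square)
    then show ?thesis using ind usq u_def assms(3) by simp
  qed
qed

lemma pw_lower: fixes w :: complex and t s :: real
  assumes "s > 0" "s \<le> t" "Im w > 0"
  shows "s^2 / (1 + cmod w * s)^2 \<le> t^2 / (cmod (1 + w * of_real t))^2"
proof -
  have p: "cmod (1 + w * of_real t) > 0" by (rule pw_pos[OF assms(3)])
  have t0: "t > 0" using assms by simp
  have up: "cmod (1 + w * of_real t) \<le> 1 + cmod w * t"
    using norm_triangle_ineq[of 1 "w * of_real t"] t0 by (simp add: norm_mult)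
  have "s * (1 + cmod w * t) \<le> t * (1 + cmod w * s)" using assms by (simp add: algebra_simps)
  moreover have "1 + cmod w * s > 0" "1 + cmod w * t > 0" using assms t0 by (simp_all add: add_pos_nonneg)
  ultimately have "s / (1 + cmod w * s) \<le> t / (1 + cmod w * t)"
    by (simp add: divide_simps)
  also have "\<dots> \<le> t / cmod (1 + w * of_real t)" using up p t0 by (intro divide_left_mono) (auto intro!: mult_pos_pos add_pos_nonneg)
  finally have "(s / (1 + cmod w * s))^2 \<le> (t / cmod (1 + w * of_real t))^2"
    using assms by (intro power_mono) auto
  then show ?thesis by (simp add: power_divide)
qed

lemma pw_first: fixes w :: complex and t \<sigma> :: real
  assumes "t \<ge> 0" "Im w > 0" "\<sigma> > 0" "cmod w * \<sigma> \<le> 1/2"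
  shows "t / (cmod (1 + w * of_real t))^2 \<le> 4*\<sigma> + (t^2 / (cmod (1 + w * of_real t))^2) / \<sigma>"
proof -
  have p: "cmod (1 + w * of_real t) > 0" by (rule pw_pos[OF assms(2)])
  define N where "N = (cmod (1 + w * of_real t))^2"
  have N0: "N > 0" using p unfolding N_def by simp
  show ?thesis
  proof (cases "t \<le> \<sigma>")
    case True
    have "cmod w * t \<le> cmod w * \<sigma>" using True by (simp add: mult_left_mono)
    then have h: "cmod (1 + w * of_real t) \<ge> 1/2" using assms by (intro pw_half) auto
    have "(1/2)^2 \<le> N" unfolding N_def using h by (intro power_mono) auto
    then have "t / N \<le> t / (1/4)" using assms(1) by (intro divide_left_mono) (auto simp: power2_eq_square)
    then have "t / N \<le> 4 * \<sigma>" using True by simp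
    moreover have "(t^2 / N) / \<sigma> \<ge> 0" using N0 assms by simp
    ultimately show ?thesis unfolding N_def by linarith
  next
    case False
    have "t / N = (t^2/N) / t" using False assms by (simp add: power2_eq_square field_simps)
    also have "\<dots> \<le> (t^2/N) / \<sigma>" using False assms N0 by (intro divide_left_mono) auto
    finally show ?thesis unfolding N_def using assms by simp
  qed
qed



definition good :: "real measure \<Rightarrow> bool" where
  "good M \<longleftrightarrow> prob_space M \<and> sets M = sets borel \<and> (AE t in M. t \<ge> 0)"

definition FF :: "real measure \<Rightarrow> complex \<Rightarrow> nat \<Rightarrow> real" where
  "FF M w l = (\<integral> t. t ^ l / (cmod (1 + w * of_real t))\<^sup>2 \<partial>M)"

definition aa :: "real measure \<Rightarrow> complex \<Rightarrow> complex" where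
  "aa M w = (\<integral> t. of_real t / (1 + w * of_real t) \<partial>M)"

lemma meas_transfer:
  assumes "sets M = sets borel" "f \<in> borel_measurable borel"
  shows "f \<in> borel_measurable M"
  using assms measurable_cong_sets[OF assms(1) refl] by simp

lemma meas1: "(\<lambda>t::real. t ^ l / (cmod (1 + w * of_real t))\<^sup>2) \<in> borel_measurable borel"
  by measurable

lemma meas2: "(\<lambda>t::real. (of_real t / (1 + w * of_real t)) :: complex) \<in> borel_measurable borel"
  by measurable

lemma cs_prob:
  fixes g :: "'a \<Rightarrow> real"
  assumes "prob_space M" "integrable M g" "integrable M (\<lambda>x. (g x)^2)"
  shows "(integral\<^sup>L M g)^2 \<le> integral\<^sup>L M (\<lambda>x. (g x)^2)"
proof -
  interpret prob_space M by fact
  define m where "m = integral\<^sup>L M g"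
  have "0 \<le> integral\<^sup>L M (\<lambda>x. (g x - m)^2)" by simp
  also have "integral\<^sup>L M (\<lambda>x. (g x - m)^2) = integral\<^sup>L M (\<lambda>x. (g x)^2 - 2*m*g x + m^2)"
    by (simp add: power2_eq_square algebra_simps)
  also have "\<dots> = integral\<^sup>L M (\<lambda>x. (g x)^2) - 2*m*integral\<^sup>L M g + m^2"
    using assms by (simp add: integral_diff integral_add prob_space)
  finally show ?thesis unfolding m_def by (simp add: power2_eq_square)
qed

context
  fixes M :: "real measure" and w :: complex
  assumes gM: "good M" and w: "Im w > 0"
begin

lemma pM: "prob_space M" using gM good_def by auto
lemma sM: "sets M = sets borel" using gM good_def by auto
lemma aeM: "AE t in M. t \<ge> 0" using gM good_def by auto

interpretation prob_space M by (rule pM)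

lemma int_sq: "integrable M (\<lambda>t. t ^ 2 / (cmod (1 + w * of_real t))\<^sup>2)"
proof (rule integrable_const_bound[where B = "1 / (Im w)^2"])
  show "AE t in M. norm (t ^ 2 / (cmod (1 + w * of_real t))\<^sup>2) \<le> 1 / (Im w)^2"
    using aeM by eventually_elim (use pw_sq_le[OF _ w] in simp)
  show "(\<lambda>t. t ^ 2 / (cmod (1 + w * of_real t))\<^sup>2) \<in> borel_measurable M"
    by (rule meas_transfer[OF sM meas1])
qed

lemma int_first: "integrable M (\<lambda>t. t ^ 1 / (cmod (1 + w * of_real t))\<^sup>2)"
proof (rule integrable_const_bound[where B = "4 * (1 / (2 * (cmod w + 1))) + (1 / (Im w)^2) / (1 / (2 * (cmod w + 1)))"])
  define \<sigma> where "\<sigma> = 1 / (2 * (cmod w + 1))"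
  have "cmod w + 1 > 0" using norm_ge_zero[of w] by linarith
  then have s0: "\<sigma> > 0" unfolding \<sigma>_def by simp
  have s1: "cmod w * \<sigma> \<le> 1/2" unfolding \<sigma>_def using \<open>cmod w + 1 > 0\<close> by (simp add: field_simps)
  show "AE t in M. norm (t ^ 1 / (cmod (1 + w * of_real t))\<^sup>2) \<le> 4 * (1 / (2 * (cmod w + 1))) + (1 / (Im w)^2) / (1 / (2 * (cmod w + 1)))"
    using aeM
  proof eventually_elim
    case (elim t)
    have "t / (cmod (1 + w * of_real t))\<^sup>2 \<le> 4*\<sigma> + (t^2 / (cmod (1 + w * of_real t))^2) / \<sigma>"
      by (rule pw_first[OF elim w s0 s1])
    also have "\<dots> \<le> 4*\<sigma> + (1 / (Im w)^2) / \<sigma>"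
      using s0 by (intro add_left_mono divide_right_mono pw_sq_le[OF elim w]) auto
    finally show ?case using elim unfolding \<sigma>_def by simp
  qed
  show "(\<lambda>t. t ^ 1 / (cmod (1 + w * of_real t))\<^sup>2) \<in> borel_measurable M"
    by (rule meas_transfer[OF sM meas1])
qed

lemma int_a: "integrable M (\<lambda>t. (of_real t / (1 + w * of_real t)) :: complex)"
proof (rule integrable_const_bound[where B = "1 / Im w"])
  show "AE t in M. norm ((of_real t / (1 + w * of_real t)) :: complex) \<le> 1 / Im w"
    using aeM
  proof eventually_elim
    case (elim t)
    have p: "cmod (1 + w * of_real t) > 0" by (rule pw_pos[OF w])
    have "t * Im w \<le> cmod (1 + w * of_real t)" by (rule pw_Im[OF elim])
    then have "t \<le> cmod (1 + w * of_real t) / Im w" using w by (simp add: field_simps)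
    then show ?case using elim p w by (simp add: norm_divide field_simps)
  qed
  show "(\<lambda>t. (of_real t / (1 + w * of_real t)) :: complex) \<in> borel_measurable M"
    by (rule meas_transfer[OF sM meas2])
qed

lemma Re_pw: "Re (of_real t / (1 + w * of_real t)) = t ^ 1 / (cmod (1 + w * of_real t))\<^sup>2 + Re w * (t ^ 2 / (cmod (1 + w * of_real t))\<^sup>2)"
proof -
  have "Re (of_real t / (1 + w * of_real t)) = (t ^ 1 + Re w * t ^ 2) / (cmod (1 + w * of_real t))\<^sup>2"
    by (simp add: Re_divide' power2_eq_square algebra_simps)
  then show ?thesis by (simp only: add_divide_distrib times_divide_eq_right)
qed

lemma Im_pw: "Im (of_real t / (1 + w * of_real t)) = - Im w * (t ^ 2 / (cmod (1 + w * of_real t))\<^sup>2)"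
  by (simp add: Im_divide' power2_eq_square field_simps)

lemma Re_aa: "Re (aa M w) = FF M w 1 + Re w * FF M w 2"
proof -
  have "Re (aa M w) = integral\<^sup>L M (\<lambda>t. Re (of_real t / (1 + w * of_real t)))"
    unfolding aa_def using int_a by simp
  also have "\<dots> = integral\<^sup>L M (\<lambda>t. t ^ 1 / (cmod (1 + w * of_real t))\<^sup>2 + Re w * (t ^ 2 / (cmod (1 + w * of_real t))\<^sup>2))"
    by (simp only: Re_pw)
  also have "\<dots> = integral\<^sup>L M (\<lambda>t. t ^ 1 / (cmod (1 + w * of_real t))\<^sup>2) + integral\<^sup>L M (\<lambda>t. Re w * (t ^ 2 / (cmod (1 + w * of_real t))\<^sup>2))"
    by (rule Bochner_Integration.integral_add[OF int_first integrable_mult_right[OF int_sq]])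
  also have "\<dots> = FF M w 1 + Re w * FF M w 2"
    unfolding FF_def by (simp only: integral_mult_right_zero)
  finally show ?thesis .
qed

lemma Im_aa: "Im (aa M w) = - Im w * FF M w 2"
proof -
  have "Im (aa M w) = integral\<^sup>L M (\<lambda>t. Im (of_real t / (1 + w * of_real t)))"
    unfolding aa_def using int_a by simp
  also have "\<dots> = integral\<^sup>L M (\<lambda>t. - Im w * (t ^ 2 / (cmod (1 + w * of_real t))\<^sup>2))"
    by (simp only: Im_pw)
  also have "\<dots> = - Im w * FF M w 2"
    unfolding FF_def by (simp only: integral_mult_right_zero)
  finally show ?thesis .
qed

lemma FF_nonneg: "FF M w l \<ge> 0"
  unfolding FF_def using aeM by (intro integral_nonneg_AE) (auto elim!: eventually_mono)

lemma aa_norm_le: "cmod (aa M w) \<le> integral\<^sup>L M (\<lambda>t. cmod (of_real t / (1 + w * of_real t)))"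
  unfolding aa_def by (rule integral_norm_bound)

lemma aa_sq: "(cmod (aa M w))^2 \<le> FF M w 2"
proof -
  have i1: "integrable M (\<lambda>t. cmod (of_real t / (1 + w * of_real t)))"
    using int_a by (rule integrable_norm)
  have i2: "integrable M (\<lambda>t. (cmod (of_real t / (1 + w * of_real t)))^2)"
    using int_sq by (simp only: pw_norm_sq)
  have "(cmod (aa M w))^2 \<le> (integral\<^sup>L M (\<lambda>t. cmod (of_real t / (1 + w * of_real t))))^2"
    using aa_norm_le by (intro power_mono) auto
  also have "\<dots> \<le> integral\<^sup>L M (\<lambda>t. (cmod (of_real t / (1 + w * of_real t)))^2)"
    by (rule cs_prob[OF pM i1 i2])
  also have "\<dots> = FF M w 2" unfolding FF_def by (simp only: pw_norm_sq)
  finally show ?thesis .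
qed

lemma aa_tail:
  assumes "T > 0" "l > 0" "cmod w * T \<le> 1/2"
  shows "cmod (aa M w) \<le> 2*T + measure M {x. T < x} / (2*l) + l/2 * FF M w 2"
proof -
  have mset: "{x. T < x} \<in> sets M" using sM by simp
  have ii: "integrable M (indicator {x. T < x} :: real \<Rightarrow> real)"
    using mset by (simp add: integrable_indicator_iff emeasure_eq_measure)
  have "cmod (aa M w) \<le> integral\<^sup>L M (\<lambda>t. cmod (of_real t / (1 + w * of_real t)))"
    by (rule aa_norm_le)
  also have "\<dots> \<le> integral\<^sup>L M (\<lambda>t. 2*T + indicator {x. T < x} t / (2*l) + l/2 * (t^2 / (cmod (1 + w * of_real t))^2))"
  proof (rule integral_mono_AE)
    show "integrable M (\<lambda>t. cmod (of_real t / (1 + w * of_real t)))"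
      using int_a by (rule integrable_norm)
    show "integrable M (\<lambda>t. 2*T + indicator {x. T < x} t / (2*l) + l/2 * (t^2 / (cmod (1 + w * of_real t))^2))"
      using ii int_sq by (intro Bochner_Integration.integrable_add integrable_const integrable_divide_zero integrable_mult_right)
    show "AE t in M. cmod (of_real t / (1 + w * of_real t)) \<le> 2*T + indicator {x. T < x} t / (2*l) + l/2 * (t^2 / (cmod (1 + w * of_real t))^2)"
      using aeM by eventually_elim (rule pw_tail[OF _ w assms])
  qed
  also have "\<dots> = integral\<^sup>L M (\<lambda>t. 2*T + indicator {x. T < x} t / (2*l)) + integral\<^sup>L M (\<lambda>t. l/2 * (t^2 / (cmod (1 + w * of_real t))^2))"
    by (intro Bochner_Integration.integral_add Bochner_Integration.integrable_add integrable_const integrable_divide_zero integrable_mult_right int_sq ii)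
  also have "integral\<^sup>L M (\<lambda>t. 2*T + indicator {x. T < x} t / (2*l)) = integral\<^sup>L M (\<lambda>t. 2*T) + integral\<^sup>L M (\<lambda>t. indicator {x. T < x} t / (2*l))"
    using ii by (intro Bochner_Integration.integral_add) auto
  also have "integral\<^sup>L M (\<lambda>t. indicator {x. T < x} t / (2*l)) = measure M {x. T < x} / (2*l)"
    using mset by (simp only: integral_divide_zero integral_indicator) (simp add: Int_absorb2 sets.sets_into_space)
  also have "integral\<^sup>L M (\<lambda>t. l/2 * (t^2 / (cmod (1 + w * of_real t))^2)) = l/2 * FF M w 2"
    unfolding FF_def by (simp only: integral_mult_right_zero)
  also have "integral\<^sup>L M (\<lambda>t. 2*T) = 2*T" by (simp add: prob_space)
  finally show ?thesis .
qed

lemma FF_lower: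
  assumes "s > 0"
  shows "measure M {x. s \<le> x} * (s^2 / (1 + cmod w * s)^2) \<le> FF M w 2"
proof -
  have mset: "{x. s \<le> x} \<in> sets M" using sM by simp
  have ii: "integrable M (indicator {x. s \<le> x} :: real \<Rightarrow> real)"
    using mset by (simp add: integrable_indicator_iff emeasure_eq_measure)
  have "measure M {x. s \<le> x} * (s^2 / (1 + cmod w * s)^2) =
        integral\<^sup>L M (\<lambda>t. indicator {x. s \<le> x} t * (s^2 / (1 + cmod w * s)^2))"
    using ii mset by (simp add: Int_absorb2 sets.sets_into_space)
  also have "\<dots> \<le> FF M w 2" unfolding FF_def
  proof (rule integral_mono)
    show "integrable M (\<lambda>t. indicator {x. s \<le> x} t * (s^2 / (1 + cmod w * s)^2))"
      using ii by (intro integrable_mult_left) auto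
    show "integrable M (\<lambda>t. t ^ 2 / (cmod (1 + w * of_real t))\<^sup>2)" by (rule int_sq)
    fix t :: real
    show "indicator {x. s \<le> x} t * (s^2 / (1 + cmod w * s)^2) \<le> t ^ 2 / (cmod (1 + w * of_real t))\<^sup>2"
      using pw_lower[OF assms _ w, of t] by (cases "s \<le> t") auto
  qed
  finally show ?thesis .
qed

lemma FF1_bound:
  assumes "\<sigma> > 0" "cmod w * \<sigma> \<le> 1/2"
  shows "FF M w 1 \<le> 4*\<sigma> + FF M w 2 / \<sigma>"
proof -
  have "FF M w 1 \<le> integral\<^sup>L M (\<lambda>t. 4*\<sigma> + (t^2 / (cmod (1 + w * of_real t))^2) / \<sigma>)"
    unfolding FF_def
  proof (rule integral_mono_AE)
    show "integrable M (\<lambda>t. t ^ 1 / (cmod (1 + w * of_real t))\<^sup>2)" by (rule int_first)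
    show "integrable M (\<lambda>t. 4*\<sigma> + (t^2 / (cmod (1 + w * of_real t))^2) / \<sigma>)"
      using int_sq by (intro Bochner_Integration.integrable_add integrable_const integrable_divide_zero)
    show "AE t in M. t ^ 1 / (cmod (1 + w * of_real t))\<^sup>2 \<le> 4*\<sigma> + (t^2 / (cmod (1 + w * of_real t))^2) / \<sigma>"
      using aeM by eventually_elim (use pw_first[OF _ w assms] in simp)
  qed
  also have "\<dots> = integral\<^sup>L M (\<lambda>t. 4*\<sigma>) + integral\<^sup>L M (\<lambda>t. (t^2 / (cmod (1 + w * of_real t))^2) / \<sigma>)"
    by (intro Bochner_Integration.integral_add integrable_const integrable_divide_zero int_sq)
  also have "integral\<^sup>L M (\<lambda>t. (t^2 / (cmod (1 + w * of_real t))^2) / \<sigma>) = FF M w 2 / \<sigma>"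
    unfolding FF_def by (simp only: integral_divide_zero)
  also have "integral\<^sup>L M (\<lambda>t. 4*\<sigma>) = 4*\<sigma>" by (simp add: prob_space)
  finally show ?thesis .
qed

lemma nn_FF:
  assumes "l \<in> {1::nat, 2}"
  shows "(\<integral>\<^sup>+ t. ennreal (t ^ l / (cmod (1 + w * of_real t))\<^sup>2) \<partial>M) = ennreal (FF M w l)"
proof -
  have i: "integrable M (\<lambda>t. t ^ l / (cmod (1 + w * of_real t))\<^sup>2)"
    using assms int_first int_sq by auto
  show ?thesis unfolding FF_def
    by (rule nn_integral_eq_integral[OF i]) (use aeM in \<open>auto elim!: eventually_mono\<close>)
qed

end



lemma ident:
  fixes z d1 d2 a b :: complex and c1 c2 A1 A2 B1 B2 :: real
  assumes z: "Im z > 0" and p1: "Im d1 > 0" and c1: "c1 > 0" and A1: "A1 \<ge> 0"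
    and e1: "d1 = of_real c1 * (a / (- z))" and e2: "d2 = of_real c2 * (b / (- z))"
    and ra: "Re a = A1 + Re d2 * A2" and ia: "Im a = - Im d2 * A2"
    and rb: "Re b = B1 + Re d1 * B2" and ib: "Im b = - Im d1 * B2"
  shows "c1 * c2 * A2 * B2 \<le> (cmod z)^2"
proof -
  have zn: "z \<noteq> 0" using z by auto
  have f1: "- z * d1 = of_real c1 * a" using e1 zn by (simp add: field_simps)
  have f2: "- z * d2 = of_real c2 * b" using e2 zn by (simp add: field_simps)
  have r1: "- (Re z * Re d1 - Im z * Im d1) = c1 * (A1 + Re d2 * A2)"
    using arg_cong[OF f1, of Re] ra by simp
  have i1: "- (Re z * Im d1 + Im z * Re d1) = - c1 * Im d2 * A2"
    using arg_cong[OF f1, of Im] ia by simp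
  have i2: "- (Re z * Im d2 + Im z * Re d2) = - c2 * Im d1 * B2"
    using arg_cong[OF f2, of Im] ib by simp
  have key: "((Re z)^2 + (Im z)^2) * Im d1 = c1 * Im z * A1 + c1 * A2 * (Re z * Im d2 + Im z * Re d2)"
  proof -
    have "Re z * (Re z * Im d1 + Im z * Re d1) = Re z * (c1 * Im d2 * A2)" using i1 by simp
    moreover have "Re z * Re d1 - Im z * Im d1 = - (c1 * (A1 + Re d2 * A2))" using r1 by linarith
    then have "Im z * (Re z * Re d1 - Im z * Im d1) = - Im z * (c1 * (A1 + Re d2 * A2))" by simp
    ultimately show ?thesis by (simp add: algebra_simps power2_eq_square)
  qed
  have key2: "((Re z)^2 + (Im z)^2) * Im d1 = c1 * Im z * A1 + c1 * c2 * A2 * B2 * Im d1"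
  proof -
    have s2: "Re z * Im d2 + Im z * Re d2 = c2 * Im d1 * B2" using i2 by linarith
    show ?thesis using key unfolding s2 by (simp add: algebra_simps)
  qed
  have "c1 * Im z * A1 \<ge> 0" using c1 z A1 by simp
  then have "c1 * c2 * A2 * B2 * Im d1 \<le> ((Re z)^2 + (Im z)^2) * Im d1" using key2 by linarith
  then have "c1 * c2 * A2 * B2 \<le> (Re z)^2 + (Im z)^2" using p1 by (simp add: mult_le_cancel_right)
  then show ?thesis by (simp add: cmod_power2)
qed

lemma Dbound:
  fixes zn Da Db Aa Bb xa xb c1 c2 \<epsilon> K q s T \<eta> :: real
  assumes e: "\<epsilon> > 0" "\<epsilon> \<le> zn" "zn \<le> K" and c: "c1 > 0" "c2 > 0"
    and pos: "Da > 0" "Db \<ge> 0" "xa \<ge> 0" "xb \<ge> 0" "Aa \<ge> 0" "Bb \<ge> 0"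
    and h1: "c1*c2*Aa*Bb \<le> zn^2"
    and h2: "zn*Da = c1*xa" and h3: "zn*Db = c2*xb"
    and h4: "xa^2 \<le> Aa" and h5: "xb^2 \<le> Bb"
    and h6: "q * (s^2/(1+Da * s)^2) \<le> Bb" and qs: "q > 0" "s > 0"
    and h7: "\<And>l. l > 0 \<Longrightarrow> Db*T \<le> 1/2 \<Longrightarrow> xa \<le> 2*T + \<eta>/(2*l) + l/2*Aa"
    and eta: "\<eta> \<le> (\<epsilon>*c2*q/(8*K^2))*\<epsilon>/(2*c1)" and T: "T > 0"
  shows "Da \<le> max (1/s) (max (2*T*(1+c1*c2)/\<epsilon>) (4*c1*T/\<epsilon>))"
proof (rule ccontr)
  assume "\<not> ?thesis"
  then have g1: "Da > 1/s" and g2: "Da > 2*T*(1+c1*c2)/\<epsilon>" and g3: "Da > 4*c1*T/\<epsilon>" by auto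
  have K: "K > 0" using e by linarith
  have zn: "zn > 0" using e by linarith
  define \<mu> where "\<mu> = \<epsilon>*c2*q/(8*K^2)"
  have mu: "\<mu> > 0" unfolding \<mu>_def using e c qs K by simp
  have Ds: "Da * s > 1" using g1 qs by (simp add: field_simps)
  have "s^2/(1+Da * s)^2 \<ge> s^2/(2*Da * s)^2"
    using Ds qs pos by (intro divide_left_mono power_mono mult_pos_pos zero_less_power) auto
  also have "s^2/(2*Da * s)^2 = 1/(4*Da^2)" using qs pos by (simp add: power2_eq_square field_simps)
  finally have "1/(4*Da^2) \<le> s^2/(1+Da * s)^2" .
  then have "q * (1/(4*Da^2)) \<le> q * (s^2/(1+Da * s)^2)" using qs by (intro mult_left_mono) auto
  then have B2lo: "q/(4*Da^2) \<le> Bb" using h6 by simp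
  have a1eq: "xa = zn*Da/c1" using h2 c by simp
  have A2lo: "(zn*Da/c1)^2 \<le> Aa" using h4 a1eq by simp
  have "zn*Da/c1 > 0" using zn pos c by simp
  then have "(zn*Da/c1)^2 > 0" using zn pos c by simp
  then have A2pos: "Aa > 0" using A2lo by linarith
  have "c1*c2*(zn*Da/c1)^2*Bb \<le> c1*c2*Aa*Bb"
    using A2lo c pos by (intro mult_right_mono mult_left_mono) auto
  then have "c1*c2*(zn*Da/c1)^2*Bb \<le> zn^2" using h1 by linarith
  then have "c2*zn^2*Da^2*Bb \<le> c1*zn^2" using c by (simp add: power2_eq_square field_simps)
  then have "zn^2*(c2*Da^2*Bb) \<le> zn^2*c1" by (simp add: algebra_simps)
  moreover have "zn^2 > 0" using zn by simp
  ultimately have B2up: "c2*Da^2*Bb \<le> c1" by (rule mult_left_le_imp_le)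
  define X where "X = c1*c2"
  have X: "X > 0" unfolding X_def using c by simp
  have "(zn*Db)^2 = c2^2*xb^2" using h3 by (simp add: power2_eq_square)
  also have "\<dots> \<le> c2^2*Bb" using h5 by (simp add: mult_left_mono)
  finally have z1: "(zn*Db)^2 \<le> c2^2*Bb" .
  have "(zn*Db)^2 * (c2*Da^2) \<le> c2^2*Bb * (c2*Da^2)"
    using z1 c by (intro mult_right_mono) auto
  also have "\<dots> = c2^2 * (c2*Da^2*Bb)" by (simp add: algebra_simps)
  also have "\<dots> \<le> c2^2 * c1" using B2up by (intro mult_left_mono) auto
  finally have "c2 * (zn^2*Db^2*Da^2) \<le> c2 * X" unfolding X_def by (simp add: power2_eq_square algebra_simps)
  then have D2a: "zn^2*Db^2*Da^2 \<le> X" using c by simp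
  have "\<epsilon>^2*Db^2*Da^2 \<le> zn^2*Db^2*Da^2"
    using e by (intro mult_right_mono power_mono) auto
  then have D2b: "Db^2 * (\<epsilon>^2*Da^2) \<le> X" using D2a by (simp add: algebra_simps)
  have "(\<epsilon>*Da)^2 > (2*T*(1+c1*c2))^2"
    using g2 e T c by (intro power_strict_mono) (auto simp: field_simps)
  then have ge: "\<epsilon>^2*Da^2 > 4*T^2*(1+X)^2" unfolding X_def by (simp add: power_mult_distrib)
  have "Db^2 * (4*T^2*(1+X)^2) \<le> Db^2 * (\<epsilon>^2*Da^2)"
    using ge by (intro mult_left_mono) auto
  then have P: "(Db*T)^2 * (4*(1+X)^2) \<le> X" using D2b by (simp add: power_mult_distrib algebra_simps)
  have "X \<le> (1+X)^2" using X by (simp add: power2_eq_square algebra_simps)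
  then have "(Db*T)^2 * (4*(1+X)^2) \<le> 1 * (1+X)^2" using P by simp
  then have "((Db*T)^2 * 4) * (1+X)^2 \<le> 1 * (1+X)^2" by (simp only: mult.assoc)
  moreover have "(1+X)^2 > 0" using X by simp
  ultimately have q4: "(Db*T)^2 * 4 \<le> 1" by (rule mult_right_le_imp_le)
  have D2T: "Db*T \<le> 1/2"
  proof (rule ccontr)
    assume "\<not> Db*T \<le> 1/2"
    then have "(1/2)^2 < (Db*T)^2" by (intro power_strict_mono) auto
    then show False using q4 by (simp add: power2_eq_square)
  qed
  have "c1*c2*Aa*(q/(4*Da^2)) \<le> c1*c2*Aa*Bb"
    using B2lo c pos by (intro mult_left_mono) auto
  also have "\<dots> \<le> zn^2" by (rule h1)
  also have "\<dots> \<le> K^2" using e zn by (intro power_mono) auto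
  finally have "c1*c2*Aa*q \<le> K^2*(4*Da^2)" using pos by (simp add: field_simps)
  then have A2up: "Aa \<le> 4*K^2*Da^2/(c1*c2*q)" using c qs by (simp add: field_simps)
  have "xa \<le> 2*T + \<eta>/(2*(\<mu>/Da)) + (\<mu>/Da)/2*Aa"
    using h7[of "\<mu>/Da"] mu pos D2T by simp
  also have "\<eta>/(2*(\<mu>/Da)) \<le> \<epsilon>*Da/(4*c1)"
  proof -
    have "\<eta>/(2*(\<mu>/Da)) = \<eta>*Da/(2*\<mu>)" using pos mu by (simp add: field_simps)
    also have "\<dots> \<le> (\<mu>*\<epsilon>/(2*c1))*Da/(2*\<mu>)"
      using eta mu pos unfolding \<mu>_def by (intro divide_right_mono mult_right_mono) auto
    also have "\<dots> = \<epsilon>*Da/(4*c1)" using mu c by (simp add: field_simps)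
    finally show ?thesis .
  qed
  also have "(\<mu>/Da)/2*Aa \<le> \<epsilon>*Da/(4*c1)"
  proof -
    have "(\<mu>/Da)/2*Aa \<le> (\<mu>/Da)/2*(4*K^2*Da^2/(c1*c2*q))"
      using A2up mu pos by (intro mult_left_mono) auto
    also have "\<dots> = \<epsilon>*Da/(4*c1)" unfolding \<mu>_def using pos c qs K
      by (simp add: field_simps power2_eq_square)
    finally show ?thesis .
  qed
  finally have "xa \<le> 2*T + \<epsilon>*Da/(2*c1)" by (simp add: mult.commute)
  moreover have "xa \<ge> \<epsilon>*Da/c1" using a1eq e c pos by (simp add: divide_right_mono mult_right_mono)
  moreover have "\<epsilon>*Da/c1 = 2*(\<epsilon>*Da/(2*c1))" by simp
  ultimately have "\<epsilon>*Da/(2*c1) \<le> 2*T"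
    by (metis (no_types) add_le_cancel_right mult_2 order_trans)
  then have "Da \<le> 4*c1*T/\<epsilon>" using e c by (simp add: field_simps)
  then show False using g3 by simp
qed



lemma exists_s:
  assumes g: "good M" and ne: "M \<noteq> return borel 0"
  shows "\<exists>s>0. measure M {x. s \<le> x} > 0"
proof (rule ccontr)
  assume H: "\<not> ?thesis"
  interpret prob_space M using g good_def by auto
  have sM: "sets M = sets borel" using g good_def by auto
  have sp: "space M = UNIV" using sets_eq_imp_space_eq[OF sM] by simp
  have ae0: "AE t in M. t \<ge> 0" using g good_def by auto
  have "AE x in M. x < 1 / real (Suc n)" for n
  proof -
    have H': "\<And>s. s > 0 \<Longrightarrow> \<not> measure M {x. s \<le> x} > 0" using H by blast
    have "(1::real) / real (Suc n) > 0" by simp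
    then have "\<not> measure M {x. 1 / real (Suc n) \<le> x} > 0" by (rule H')
    then have "measure M {x. 1 / real (Suc n) \<le> x} \<le> 0" by simp
    then have "emeasure M {x. 1 / real (Suc n) \<le> x} = 0"
      by (simp add: emeasure_eq_measure measure_nonneg antisym)
    moreover have "{x \<in> space M. \<not> x < 1 / real (Suc n)} = {x. 1 / real (Suc n) \<le> x}"
      using sp by auto
    moreover have "{x. 1 / real (Suc n) \<le> (x::real)} \<in> sets M" using sM by simp
    ultimately show ?thesis by (subst AE_iff_measurable) auto
  qed
  then have "AE x in M. \<forall>n. x < 1 / real (Suc n)" by (simp add: AE_all_countable)
  then have ae: "AE x in M. x = 0" using ae0
  proof eventually_elim
    case (elim x)
    show ?case
    proof (rule ccontr)
      assume "x \<noteq> 0"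
      then have "x > 0" using elim by simp
      then obtain n where "inverse (real (Suc n)) < x" using reals_Archimedean by blast
      then show False using elim(1)[rule_format, of n] by (simp add: inverse_eq_divide)
    qed
  qed
  have "M = return borel 0"
  proof (rule measure_eqI)
    show "sets M = sets (return borel 0)" using sM by simp
    fix A assume A: "A \<in> sets M"
    have "emeasure M A = (\<integral>\<^sup>+ x. indicator A x \<partial>M)" using A by simp
    also have "\<dots> = (\<integral>\<^sup>+ x. indicator A 0 \<partial>M)"
      using ae by (intro nn_integral_cong_AE) auto
    also have "\<dots> = indicator A 0" by (simp add: emeasure_space_1)
    also have "\<dots> = emeasure (return borel 0) A" using A sM by simp
    finally show "emeasure M A = emeasure (return borel 0) A" .
  qed
  then show False using ne by simp
qed

lemma exists_T:
  assumes g: "good M" and eta: "\<eta> > 0"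
  shows "\<exists>T>0. measure M {x. T < x} \<le> \<eta>"
proof -
  interpret prob_space M using g good_def by auto
  have sM: "sets M = sets borel" using g good_def by auto
  define A where "A n = {x::real. real n < x}" for n
  have "A n \<in> sets M" for n unfolding A_def using sM by simp
  then have "range A \<subseteq> sets M" by blast
  moreover have "decseq A" unfolding A_def decseq_def
  proof (intro allI impI subsetI)
    fix m n :: nat and x :: real assume "m \<le> n" "x \<in> {x. real n < x}"
    then show "x \<in> {x. real m < x}" by simp
  qed
  ultimately have L: "(\<lambda>n. measure M (A n)) \<longlonglongrightarrow> measure M (\<Inter>i. A i)"
    by (rule finite_Lim_measure_decseq)
  have "(\<Inter>i. A i) = {}"
  proof (rule equals0I)
    fix x assume x: "x \<in> (\<Inter>i. A i)"
    obtain n where "x < real n" using reals_Archimedean2 by blast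
    moreover have "x \<in> A n" using x by blast
    ultimately show False unfolding A_def by simp
  qed
  then have L0: "(\<lambda>n. measure M (A n)) \<longlonglongrightarrow> 0" using L by simp
  then have "eventually (\<lambda>n. measure M (A n) < \<eta>) sequentially"
    using eta by (rule order_tendstoD)
  then obtain N where N: "measure M (A N) < \<eta>" by (auto simp: eventually_sequentially)
  have "measure M {x. real N + 1 < x} \<le> measure M (A N)"
    unfolding A_def using sM by (intro finite_measure_mono) auto
  then have "measure M {x. real N + 1 < x} \<le> \<eta>" using N by simp
  moreover have "real N + 1 > 0" by simp
  ultimately show ?thesis by blast
qed



lemma aa_eq_conv:
  "(\<integral> t. of_real t / (- z * (1 + w * of_real t)) \<partial>M) = aa M w / (- z)"
proof -
  have "(\<lambda>t. of_real t / (- z * (1 + w * of_real t))) = (\<lambda>t. (of_real t / (1 + w * of_real t)) / (- z))"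
    by (simp add: divide_divide_eq_left mult.commute)
  then show ?thesis unfolding aa_def by (simp only: integral_divide_zero)
qed

lemma pointwise:
  fixes z d1 d2 :: complex
  assumes g1: "good M1" and g2: "good M2" and c: "c1 > 0" "c2 > 0"
    and z: "Im z > 0" and p1: "Im d1 > 0" and p2: "Im d2 > 0"
    and e1: "d1 = of_real c1 * (aa M1 d2 / (- z))"
    and e2: "d2 = of_real c2 * (aa M2 d1 / (- z))"
  shows "c1 * c2 * FF M1 d2 2 * FF M2 d1 2 \<le> (cmod z)^2"
    and "cmod z * cmod d1 = c1 * cmod (aa M1 d2)"
proof -
  show "c1 * c2 * FF M1 d2 2 * FF M2 d1 2 \<le> (cmod z)^2"
    by (rule ident[OF z p1 c(1) FF_nonneg[OF g1 p2] e1 e2 Re_aa[OF g1 p2] Im_aa[OF g1 p2]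
          Re_aa[OF g2 p1] Im_aa[OF g2 p1]])
  have zn: "cmod z > 0" using z by (auto simp: zero_less_norm_iff)
  have "cmod d1 = c1 * (cmod (aa M1 d2) / cmod z)" using e1 c by (simp add: norm_mult norm_divide)
  then show "cmod z * cmod d1 = c1 * cmod (aa M1 d2)" using zn by (simp add: field_simps)
qed

lemma side_bound:
  fixes R :: "complex set" and d1 d2 :: "complex \<Rightarrow> complex"
  assumes g1: "good M1" and g2: "good M2" and c: "c1 > 0" "c2 > 0"
    and s2: "s2 > 0" "measure M2 {x. s2 \<le> x} > 0"
    and im: "\<And>z. z \<in> R \<Longrightarrow> Im z > 0 \<and> Im (d1 z) > 0 \<and> Im (d2 z) > 0"
    and e1: "\<And>z. z \<in> R \<Longrightarrow> d1 z = of_real c1 * (aa M1 (d2 z) / (- z))"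
    and e2: "\<And>z. z \<in> R \<Longrightarrow> d2 z = of_real c2 * (aa M2 (d1 z) / (- z))"
    and eps: "\<epsilon> > 0" and zb: "\<And>z. z \<in> R \<Longrightarrow> \<epsilon> \<le> cmod z \<and> cmod z \<le> K"
  shows "\<exists>Dm. \<forall>z\<in>R. cmod (d1 z) \<le> Dm"
proof (cases "R = {}")
  case True then show ?thesis by auto
next
  case False
  then obtain z0 where "z0 \<in> R" by auto
  then have K: "K > 0" using zb[of z0] eps by linarith
  define q where "q = measure M2 {x. s2 \<le> x}"
  have q: "q > 0" using s2 unfolding q_def by simp
  define \<eta> where "\<eta> = (\<epsilon>*c2*q/(8*K^2))*\<epsilon>/(2*c1)"
  have eta: "\<eta> > 0" unfolding \<eta>_def using eps c q K by simp
  obtain T where T: "T > 0" "measure M1 {x. T < x} \<le> \<eta>" using exists_T[OF g1 eta] by blast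
  show ?thesis
  proof (intro exI ballI)
    fix z assume zR: "z \<in> R"
    have z: "Im z > 0" and p1: "Im (d1 z) > 0" and p2: "Im (d2 z) > 0" using im[OF zR] by auto
    have pd1: "cmod (d1 z) > 0" using p1 by (auto simp: zero_less_norm_iff)
    note pw = pointwise[OF g1 g2 c z p1 p2 e1[OF zR] e2[OF zR]]
    note pw' = pointwise[OF g2 g1 c(2) c(1) z p2 p1 e2[OF zR] e1[OF zR]]
    show "cmod (d1 z) \<le> max (1/s2) (max (2*T*(1+c1*c2)/\<epsilon>) (4*c1*T/\<epsilon>))"
    proof (rule Dbound[where zn = "cmod z" and K = K and Db = "cmod (d2 z)"
        and Aa = "FF M1 (d2 z) 2" and Bb = "FF M2 (d1 z) 2"
        and xa = "cmod (aa M1 (d2 z))" and xb = "cmod (aa M2 (d1 z))" and q = q and \<eta> = \<eta>])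
      show "\<epsilon> > 0" by (rule eps)
      show "\<epsilon> \<le> cmod z" "cmod z \<le> K" using zb[OF zR] by auto
      show "c1 > 0" "c2 > 0" by (rule c(1), rule c(2))
      show "cmod (d1 z) > 0" by (rule pd1)
      show "cmod (d2 z) \<ge> 0" "cmod (aa M1 (d2 z)) \<ge> 0" "cmod (aa M2 (d1 z)) \<ge> 0" by auto
      show "FF M1 (d2 z) 2 \<ge> 0" by (rule FF_nonneg[OF g1 p2])
      show "FF M2 (d1 z) 2 \<ge> 0" by (rule FF_nonneg[OF g2 p1])
      show "c1*c2*FF M1 (d2 z) 2*FF M2 (d1 z) 2 \<le> (cmod z)^2" by (rule pw(1))
      show "cmod z * cmod (d1 z) = c1 * cmod (aa M1 (d2 z))" by (rule pw(2))
      show "cmod z * cmod (d2 z) = c2 * cmod (aa M2 (d1 z))" by (rule pw'(2))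
      show "(cmod (aa M1 (d2 z)))^2 \<le> FF M1 (d2 z) 2" by (rule aa_sq[OF g1 p2])
      show "(cmod (aa M2 (d1 z)))^2 \<le> FF M2 (d1 z) 2" by (rule aa_sq[OF g2 p1])
      show "q * (s2^2/(1 + cmod (d1 z) * s2)^2) \<le> FF M2 (d1 z) 2"
        unfolding q_def by (rule FF_lower[OF g2 p1 s2(1)])
      show "q > 0" "s2 > 0" by (rule q, rule s2(1))
      show "\<eta> \<le> (\<epsilon>*c2*q/(8*K^2))*\<epsilon>/(2*c1)" unfolding \<eta>_def by simp
      show "T > 0" by (rule T(1))
      fix l :: real assume l: "l > 0" "cmod (d2 z) * T \<le> 1/2"
      have "cmod (aa M1 (d2 z)) \<le> 2*T + measure M1 {x. T < x} / (2*l) + l/2 * FF M1 (d2 z) 2"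
        by (rule aa_tail[OF g1 p2 T(1) l(1) l(2)])
      also have "measure M1 {x. T < x} / (2*l) \<le> \<eta> / (2*l)"
        using T(2) l by (intro divide_right_mono) auto
      finally show "cmod (aa M1 (d2 z)) \<le> 2*T + \<eta>/(2*l) + l/2 * FF M1 (d2 z) 2" by simp
    qed
  qed
qed

lemma side_final:
  fixes R :: "complex set" and d1 d2 :: "complex \<Rightarrow> complex"
  assumes g1: "good M1" and g2: "good M2" and c: "c1 > 0" "c2 > 0"
    and s2: "s2 > 0" "measure M2 {x. s2 \<le> x} > 0"
    and im: "\<And>z. z \<in> R \<Longrightarrow> Im z > 0 \<and> Im (d1 z) > 0 \<and> Im (d2 z) > 0"
    and e1: "\<And>z. z \<in> R \<Longrightarrow> d1 z = of_real c1 * (aa M1 (d2 z) / (- z))"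
    and e2: "\<And>z. z \<in> R \<Longrightarrow> d2 z = of_real c2 * (aa M2 (d1 z) / (- z))"
    and zb: "\<And>z. z \<in> R \<Longrightarrow> cmod z \<le> K"
    and b1: "\<And>z. z \<in> R \<Longrightarrow> cmod (d1 z) \<le> Dm1"
    and b2: "\<And>z. z \<in> R \<Longrightarrow> cmod (d2 z) \<le> Dm2"
  shows "\<exists>Mb::real. \<forall>z\<in>R. \<forall>l\<in>{1::nat, 2}.
     (\<integral>\<^sup>+ t. ennreal (t ^ l / (cmod (1 + d2 z * of_real t))\<^sup>2) \<partial>M1) \<le> ennreal Mb"
proof (cases "R = {}")
  case True then show ?thesis by auto
next
  case False
  then obtain z0 where z0: "z0 \<in> R" by auto
  have D1: "Dm1 \<ge> 0" using b1[OF z0] norm_ge_zero[of "d1 z0"] by linarith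
  have D2: "Dm2 \<ge> 0" using b2[OF z0] norm_ge_zero[of "d2 z0"] by linarith
  define q where "q = measure M2 {x. s2 \<le> x}"
  have q: "q > 0" using s2 unfolding q_def by simp
  define \<beta> where "\<beta> = q * (s2^2/(1 + Dm1 * s2)^2)"
  have "1 + Dm1 * s2 > 0" using D1 s2 by (simp add: add_pos_nonneg)
  then have \<beta>: "\<beta> > 0" unfolding \<beta>_def using q s2 by (intro mult_pos_pos divide_pos_pos) auto
  define \<sigma> where "\<sigma> = 1 / (2 * (Dm2 + 1))"
  have \<sigma>: "\<sigma> > 0" unfolding \<sigma>_def using D2 by simp
  define A where "A = K^2 / (c1*c2*\<beta>)"
  show ?thesis
  proof (intro exI ballI)
    fix z and l :: nat assume zR: "z \<in> R" and l: "l \<in> {1, 2}"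
    have z: "Im z > 0" and p1: "Im (d1 z) > 0" and p2: "Im (d2 z) > 0" using im[OF zR] by auto
    note pw = pointwise[OF g1 g2 c z p1 p2 e1[OF zR] e2[OF zR]]
    have "(1 + cmod (d1 z) * s2)^2 \<le> (1 + Dm1 * s2)^2"
      using b1[OF zR] s2 by (intro power_mono add_left_mono mult_right_mono) auto
    moreover have "1 + cmod (d1 z) * s2 > 0" using s2 by (simp add: add_pos_nonneg)
    ultimately have "s2^2/(1 + Dm1 * s2)^2 \<le> s2^2/(1 + cmod (d1 z) * s2)^2"
      using s2 by (intro divide_left_mono) (auto intro!: mult_pos_pos)
    then have "\<beta> \<le> q * (s2^2/(1 + cmod (d1 z) * s2)^2)"
      unfolding \<beta>_def using q by (intro mult_left_mono) auto
    also have "\<dots> \<le> FF M2 (d1 z) 2" unfolding q_def by (rule FF_lower[OF g2 p1 s2(1)])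
    finally have Bge: "\<beta> \<le> FF M2 (d1 z) 2" .
    have A2nn: "FF M1 (d2 z) 2 \<ge> 0" by (rule FF_nonneg[OF g1 p2])
    have "c1*c2*FF M1 (d2 z) 2*\<beta> \<le> c1*c2*FF M1 (d2 z) 2*FF M2 (d1 z) 2"
      using Bge A2nn c by (intro mult_left_mono) auto
    also have "\<dots> \<le> (cmod z)^2" by (rule pw(1))
    also have "\<dots> \<le> K^2" using zb[OF zR] by (intro power_mono) auto
    finally have "FF M1 (d2 z) 2 * (c1*c2*\<beta>) \<le> K^2" by (simp add: algebra_simps)
    then have A2: "FF M1 (d2 z) 2 \<le> A" unfolding A_def using c \<beta> by (simp add: field_simps)
    have "cmod (d2 z) * \<sigma> \<le> Dm2 * \<sigma>" using b2[OF zR] \<sigma> by (intro mult_right_mono) auto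
    also have "\<dots> \<le> 1/2" unfolding \<sigma>_def using D2 by (simp add: field_simps)
    finally have s12: "cmod (d2 z) * \<sigma> \<le> 1/2" .
    have "FF M1 (d2 z) 1 \<le> 4*\<sigma> + FF M1 (d2 z) 2 / \<sigma>" by (rule FF1_bound[OF g1 p2 \<sigma> s12])
    also have "\<dots> \<le> 4*\<sigma> + A / \<sigma>" using A2 \<sigma> by (intro add_left_mono divide_right_mono) auto
    finally have A1: "FF M1 (d2 z) 1 \<le> 4*\<sigma> + A / \<sigma>" .
    have A0: "A \<ge> 0" unfolding A_def using c \<beta> by simp
    have "A / \<sigma> \<ge> 0" using A0 \<sigma> by simp
    have "l = 1 \<or> l = 2" using l by auto
    then have "FF M1 (d2 z) l \<le> 4*\<sigma> + A / \<sigma> + A"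
    proof
      assume "l = 1" then show ?thesis using A1 A0 by simp
    next
      assume "l = 2" then show ?thesis using A2 \<open>A / \<sigma> \<ge> 0\<close> \<sigma> by simp
    qed
    then show "(\<integral>\<^sup>+ t. ennreal (t ^ l / (cmod (1 + d2 z * of_real t))\<^sup>2) \<partial>M1) \<le> ennreal (4*\<sigma> + A / \<sigma> + A)"
      by (simp add: nn_FF[OF g1 p2 l] ennreal_leI)
  qed
qed



theorem lemma3p3:
  fixes c :: real and \<nu> \<nu>' :: "real measure"
    and \<delta> \<delta>' :: "complex \<Rightarrow> complex"
  assumes c_pos: "c > 0"
    and nu_prob: "prob_space \<nu>" and nu_sets: "sets \<nu> = sets borel"
    and nu_pos: "AE t in \<nu>. t \<ge> 0" and nu_ne: "\<nu> \<noteq> return borel 0"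
    and nu'_prob: "prob_space \<nu>'" and nu'_sets: "sets \<nu>' = sets borel"
    and nu'_pos: "AE t in \<nu>'. t \<ge> 0" and nu'_ne: "\<nu>' \<noteq> return borel 0"
    and delta_im: "\<And>z. Im z > 0 \<Longrightarrow> Im (\<delta> z) > 0 \<and> Im (\<delta>' z) > 0"
    and delta_eq: "\<And>z. Im z > 0 \<Longrightarrow>
        \<delta> z = of_real c * (\<integral> t. of_real t / (- z * (1 + \<delta>' z * of_real t)) \<partial>\<nu>)"
    and delta'_eq: "\<And>z. Im z > 0 \<Longrightarrow>
        \<delta>' z = (\<integral> t. of_real t / (- z * (1 + \<delta> z * of_real t)) \<partial>\<nu>')"
  shows "\<forall>R. R \<subseteq> {z. Im z > 0} \<and> bounded R \<and> (\<exists>\<epsilon>>0. \<forall>z\<in>R. \<epsilon> \<le> \<bar>Re z\<bar>) \<longrightarrow>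
           (\<exists>M::real. \<forall>z\<in>R. \<forall>l\<in>{1::nat, 2}.
              (\<integral>\<^sup>+ t. ennreal (t ^ l / (cmod (1 + \<delta>' z * of_real t))\<^sup>2) \<partial>\<nu>) \<le> ennreal M \<and>
              (\<integral>\<^sup>+ t. ennreal (t ^ l / (cmod (1 + \<delta> z * of_real t))\<^sup>2) \<partial>\<nu>') \<le> ennreal M)"
proof (intro allI impI)
  fix R :: "complex set"
  assume H: "R \<subseteq> {z. Im z > 0} \<and> bounded R \<and> (\<exists>\<epsilon>>0. \<forall>z\<in>R. \<epsilon> \<le> \<bar>Re z\<bar>)"
  have "bounded R" using H by blast
  then obtain K where K0: "K > 0" and K1: "\<forall>z\<in>R. norm z \<le> K" unfolding bounded_pos by blast
  have K: "K > 0" "\<And>z. z \<in> R \<Longrightarrow> cmod z \<le> K" using K0 K1 by auto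
  obtain \<epsilon> where eps: "\<epsilon> > 0" and er: "\<And>z. z \<in> R \<Longrightarrow> \<epsilon> \<le> \<bar>Re z\<bar>" using H by blast
  have zb: "\<epsilon> \<le> cmod z \<and> cmod z \<le> K" if "z \<in> R" for z
    using er[OF that] K(2)[OF that] abs_Re_le_cmod[of z] by linarith
  have g: "good \<nu>" unfolding good_def using nu_prob nu_sets nu_pos by auto
  have g': "good \<nu>'" unfolding good_def using nu'_prob nu'_sets nu'_pos by auto
  obtain s1 where s1: "s1 > 0" "measure \<nu> {x. s1 \<le> x} > 0" using exists_s[OF g nu_ne] by blast
  obtain s2 where s2: "s2 > 0" "measure \<nu>' {x. s2 \<le> x} > 0" using exists_s[OF g' nu'_ne] by blast
  have zR: "Im z > 0" if "z \<in> R" for z using H that by auto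
  have im: "Im z > 0 \<and> Im (\<delta> z) > 0 \<and> Im (\<delta>' z) > 0" if "z \<in> R" for z
    using zR[OF that] delta_im[OF zR[OF that]] by auto
  have im': "Im z > 0 \<and> Im (\<delta>' z) > 0 \<and> Im (\<delta> z) > 0" if "z \<in> R" for z
    using im[OF that] by auto
  have e1: "\<delta> z = of_real c * (aa \<nu> (\<delta>' z) / (- z))" if "z \<in> R" for z
    using delta_eq[OF zR[OF that]] by (simp only: aa_eq_conv)
  have e2: "\<delta>' z = of_real 1 * (aa \<nu>' (\<delta> z) / (- z))" if "z \<in> R" for z
    using delta'_eq[OF zR[OF that]] by (simp only: aa_eq_conv) simp
  have one: "(1::real) > 0" by simp
  have "\<exists>Dm. \<forall>z\<in>R. cmod (\<delta> z) \<le> Dm"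
    by (rule side_bound[OF g g' c_pos one s2 im e1 e2 eps zb])
  then obtain Dm1 where b1: "\<And>z. z \<in> R \<Longrightarrow> cmod (\<delta> z) \<le> Dm1" by blast
  have "\<exists>Dm. \<forall>z\<in>R. cmod (\<delta>' z) \<le> Dm"
    by (rule side_bound[OF g' g one c_pos s1 im' e2 e1 eps zb])
  then obtain Dm2 where b2: "\<And>z. z \<in> R \<Longrightarrow> cmod (\<delta>' z) \<le> Dm2" by blast
  obtain Mb1 where M1: "\<forall>z\<in>R. \<forall>l\<in>{1::nat, 2}.
     (\<integral>\<^sup>+ t. ennreal (t ^ l / (cmod (1 + \<delta>' z * of_real t))\<^sup>2) \<partial>\<nu>) \<le> ennreal Mb1"
    using side_final[OF g g' c_pos one s2 im e1 e2 K(2) b1 b2] by blast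
  obtain Mb2 where M2: "\<forall>z\<in>R. \<forall>l\<in>{1::nat, 2}.
     (\<integral>\<^sup>+ t. ennreal (t ^ l / (cmod (1 + \<delta> z * of_real t))\<^sup>2) \<partial>\<nu>') \<le> ennreal Mb2"
    using side_final[OF g' g one c_pos s1 im' e2 e1 K(2) b2 b1] by blast
  have m1: "ennreal Mb1 \<le> ennreal (max Mb1 Mb2)" by (rule ennreal_leI) simp
  have m2: "ennreal Mb2 \<le> ennreal (max Mb1 Mb2)" by (rule ennreal_leI) simp
  show "\<exists>M::real. \<forall>z\<in>R. \<forall>l\<in>{1::nat, 2}.
              (\<integral>\<^sup>+ t. ennreal (t ^ l / (cmod (1 + \<delta>' z * of_real t))\<^sup>2) \<partial>\<nu>) \<le> ennreal M \<and>
              (\<integral>\<^sup>+ t. ennreal (t ^ l / (cmod (1 + \<delta> z * of_real t))\<^sup>2) \<partial>\<nu>') \<le> ennreal M"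
  proof (intro exI[of _ "max Mb1 Mb2"] ballI conjI)
    fix z and l :: nat assume z: "z \<in> R" and l: "l \<in> {1, 2}"
    show "(\<integral>\<^sup>+ t. ennreal (t ^ l / (cmod (1 + \<delta>' z * of_real t))\<^sup>2) \<partial>\<nu>) \<le> ennreal (max Mb1 Mb2)"
      using M1 z l m1 by (meson order_trans)
    show "(\<integral>\<^sup>+ t. ennreal (t ^ l / (cmod (1 + \<delta> z * of_real t))\<^sup>2) \<partial>\<nu>') \<le> ennreal (max Mb1 Mb2)"
      using M2 z l m2 by (meson order_trans)
  qed
qed

end
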